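(* Fix $0<d<1$ and let $c(x)=x^d$. For common slot instances, in every game under the coordination mechanism described in the context, for every optimal assignment $s^*$ there exists a payment vector $\xi$ such that $(s^*,\xi)$ is a Nash equilibrium.
   Context: A game consists of a cost function $c$ (here $c(x)=x^d$, $c(0)=0$), slots $t=1,\dots,T$, and a set of jobs, each job $j$ having integer release time $r_j$ and deadline $d_j$ with $0<r_j<d_j<T$. A common slot instance is one in which some slot lies in $[r_j,d_j)$ for every job $j$. An assignment $s$ gives each job a slot $s_j$ with $r_j\le s_j<d_j$; the load is $l_t(s)=|\{j:s_j=t\}|$ and $C(s)=\sum_{t=1}^T c(l_t(s))$; an optimal assignment minimizes $C$. In the coordination mechanism, each job $j$ chooses a pair $(s_j,\xi_j)$ with $s_j\in[r_j,d_j)$ and payment $\xi_j\ge0$. Slot $t$ is opened iff $\sum_{j:s_j=t}\xi_j\ge c(l_t(s))$; a job whose slot is not opened has infinite cost, otherwise its cost is $\xi_j$. A profile $(s,\xi)$ is a Nash equilibrium if for every job $j$: (i) $\sum_{j':s_{j'}=s_j}\xi_{j'}\ge c(l_{s_j}(s))$; (ii) for every $t\in[r_j,d_j)\setminus\{s_j\}$, $\xi_j\le\max\{0,\,c(l_t(s)+1)-\sum_{j':s_{j'}=t}\xi_{j'}\}$; (iii) $\xi_j\le\max\{0,\,c(l_{s_j}(s))-\sum_{j':s_{j'}=s_j,\,j'\ne j}\xi_{j'}\}$. *)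

theory Defs
  imports Complex_Main
begin

definition cost :: "real \<Rightarrow> nat \<Rightarrow> real" where
  "cost d x = (if x = 0 then 0 else (real x) powr d)"

text \<open>A game: finite job set J, release times r, deadlines dl, horizon T.\<close>
definition valid_game :: "'j set \<Rightarrow> ('j \<Rightarrow> nat) \<Rightarrow> ('j \<Rightarrow> nat) \<Rightarrow> nat \<Rightarrow> bool" where
  "valid_game J r dl T \<longleftrightarrow> finite J \<and> (\<forall>j\<in>J. 0 < r j \<and> r j < dl j \<and> dl j < T)"

definition common_slot :: "'j set \<Rightarrow> ('j \<Rightarrow> nat) \<Rightarrow> ('j \<Rightarrow> nat) \<Rightarrow> nat \<Rightarrow> bool" where
  "common_slot J r dl T \<longleftrightarrow> (\<exists>t\<in>{1..T}. \<forall>j\<in>J. r j \<le> t \<and> t < dl j)"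

definition feasible :: "'j set \<Rightarrow> ('j \<Rightarrow> nat) \<Rightarrow> ('j \<Rightarrow> nat) \<Rightarrow> ('j \<Rightarrow> nat) \<Rightarrow> bool" where
  "feasible J r dl s \<longleftrightarrow> (\<forall>j\<in>J. r j \<le> s j \<and> s j < dl j)"

definition load :: "'j set \<Rightarrow> ('j \<Rightarrow> nat) \<Rightarrow> nat \<Rightarrow> nat" where
  "load J s t = card {j\<in>J. s j = t}"

definition total_cost :: "real \<Rightarrow> 'j set \<Rightarrow> nat \<Rightarrow> ('j \<Rightarrow> nat) \<Rightarrow> real" where
  "total_cost d J T s = (\<Sum>t\<in>{1..T}. cost d (load J s t))"

definition optimal :: "real \<Rightarrow> 'j set \<Rightarrow> ('j \<Rightarrow> nat) \<Rightarrow> ('j \<Rightarrow> nat) \<Rightarrow> nat \<Rightarrow> ('j \<Rightarrow> nat) \<Rightarrow> bool" where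
  "optimal d J r dl T s \<longleftrightarrow> feasible J r dl s \<and>
     (\<forall>s'. feasible J r dl s' \<longrightarrow> total_cost d J T s \<le> total_cost d J T s')"

definition paid :: "'j set \<Rightarrow> ('j \<Rightarrow> nat) \<Rightarrow> ('j \<Rightarrow> real) \<Rightarrow> nat \<Rightarrow> real" where
  "paid J s \<xi> t = (\<Sum>j'\<in>{j'\<in>J. s j' = t}. \<xi> j')"

definition nash :: "real \<Rightarrow> 'j set \<Rightarrow> ('j \<Rightarrow> nat) \<Rightarrow> ('j \<Rightarrow> nat) \<Rightarrow> ('j \<Rightarrow> nat) \<Rightarrow> ('j \<Rightarrow> real) \<Rightarrow> bool" where
  "nash d J r dl s \<xi> \<longleftrightarrow> feasible J r dl s \<and> (\<forall>j\<in>J. 0 \<le> \<xi> j) \<and>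
     (\<forall>j\<in>J.
        paid J s \<xi> (s j) \<ge> cost d (load J s (s j)) \<and>
        (\<forall>t. r j \<le> t \<and> t < dl j \<and> t \<noteq> s j \<longrightarrow>
            \<xi> j \<le> max 0 (cost d (load J s t + 1) - paid J s \<xi> t)) \<and>
        \<xi> j \<le> max 0 (cost d (load J s (s j)) - (\<Sum>j'\<in>{j'\<in>J. s j' = s j \<and> j' \<noteq> j}. \<xi> j')))"

end

theory Submission
  imports Defs
begin

lemma tc_identity:
  assumes "valid_game J r dl T" and "feasible J r dl s"
  shows "total_cost d J T s = (\<Sum>j\<in>J. cost d (load J s (s j)) / real (load J s (s j)))"
proof -
  have fin: "finite J" using assms(1) by (simp add: valid_game_def)
  have img: "s ` J \<subseteq> {1..T}"
    using assms unfolding valid_game_def feasible_def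
    by (auto; fastforce)
  have "(\<Sum>j\<in>J. cost d (load J s (s j)) / real (load J s (s j)))
      = (\<Sum>t\<in>{1..T}. \<Sum>j\<in>{x. x \<in> J \<and> s x = t}. cost d (load J s (s j)) / real (load J s (s j)))"
    by (rule sym, rule sum.group[OF fin finite_atLeastAtMost img])
  also have "\<dots> = (\<Sum>t\<in>{1..T}. cost d (load J s t))"
  proof (rule sum.cong[OF refl])
    fix t
    have "(\<Sum>j\<in>{x. x \<in> J \<and> s x = t}. cost d (load J s (s j)) / real (load J s (s j)))
        = (\<Sum>j\<in>{x. x \<in> J \<and> s x = t}. cost d (load J s t) / real (load J s t))"
      by (rule sum.cong) auto
    also have "\<dots> = real (load J s t) * (cost d (load J s t) / real (load J s t))"
      by (simp add: load_def)
    also have "\<dots> = cost d (load J s t)"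
      by (cases "load J s t = 0") (auto simp: cost_def)
    finally show "(\<Sum>j\<in>{x. x \<in> J \<and> s x = t}. cost d (load J s (s j)) / real (load J s (s j)))
        = cost d (load J s t)" .
  qed
  finally show ?thesis by (simp add: total_cost_def)
qed

theorem theorem6:
  fixes d :: real and J :: "'j set" and r dl :: "'j \<Rightarrow> nat" and T :: nat and s :: "'j \<Rightarrow> nat"
  assumes "0 < d" and "d < 1"
    and "valid_game J r dl T"
    and "common_slot J r dl T"
    and "optimal d J r dl T s"
  shows "\<exists>\<xi> :: 'j \<Rightarrow> real. nash d J r dl s \<xi>"
proof -
  have fin: "finite J" using assms(3) by (simp add: valid_game_def)
  have feas: "feasible J r dl s" using assms(5) by (simp add: optimal_def)
  define n where "n = card J"
  obtain t0 where t0: "t0 \<in> {1..T}" "\<forall>j\<in>J. r j \<le> t0 \<and> t0 < dl j"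
    using assms(4) by (auto simp: common_slot_def)
  define s' where "s' = (\<lambda>_::'j. t0)"
  have feas': "feasible J r dl s'" using t0 by (simp add: feasible_def s'_def)
  have ls': "load J s' (s' j) = n" for j by (simp add: load_def s'_def n_def)
  have loadpos: "load J s (s j) \<ge> 1" if "j \<in> J" for j
  proof -
    have "j \<in> {x\<in>J. s x = s j}" using that by simp
    then have "card {x\<in>J. s x = s j} \<noteq> 0" using fin by auto
    then show ?thesis by (simp add: load_def)
  qed
  have loadle: "load J s t \<le> n" for t
    unfolding load_def n_def using fin by (intro card_mono) auto
  show ?thesis
  proof (cases "J = {}")
    case True
    then show ?thesis using feas by (auto simp: nash_def)
  next
    case False
    then have npos: "n \<ge> 1" using fin by (simp add: n_def Suc_le_eq card_gt_0_iff)
    have costn: "cost d n = real n * real n powr (d - 1)"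
      using npos by (simp add: cost_def powr_diff)
    have allfull: "load J s (s j) = n" if "j \<in> J" for j
    proof (rule ccontr)
      assume ne: "load J s (s j) \<noteq> n"
      have "total_cost d J T s' < total_cost d J T s"
      proof -
        have "total_cost d J T s' = (\<Sum>k\<in>J. real n powr (d - 1))"
          using tc_identity[OF assms(3) feas'] ls' costn npos by simp
        also have "\<dots> < (\<Sum>k\<in>J. cost d (load J s (s k)) / real (load J s (s k)))"
        proof (rule sum_strict_mono_ex1[OF fin])
          have eq: "cost d (load J s (s k)) / real (load J s (s k)) = real (load J s (s k)) powr (d - 1)"
            if "k \<in> J" for k
            using loadpos[OF that] by (simp add: cost_def powr_diff)
          have le: "real n powr (d - 1) \<le> real (load J s (s k)) powr (d - 1)" if "k \<in> J" for k
            using loadpos[OF that] loadle[of "s k"] assms(2)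
            by (intro powr_mono2') auto
          show "\<forall>x\<in>J. real n powr (d - 1) \<le> cost d (load J s (s x)) / real (load J s (s x))"
            using eq le by simp
          have lt: "real n powr (d - 1) < real (load J s (s j)) powr (d - 1)"
            using loadpos[OF that] loadle[of "s j"] ne assms(2)
            by (intro powr_less_mono2_neg) auto
          show "\<exists>x\<in>J. real n powr (d - 1) < cost d (load J s (s x)) / real (load J s (s x))"
          proof (rule bexI[OF _ that])
            show "real n powr (d - 1) < cost d (load J s (s j)) / real (load J s (s j))"
              using lt eq[OF that] by simp
          qed
        qed
        also have "\<dots> = total_cost d J T s"
          using tc_identity[OF assms(3) feas] by simp
        finally show ?thesis .
      qed
      then show False using assms(5) feas' by (auto simp: optimal_def)
    qed
    have same: "s k = s j" if "j \<in> J" "k \<in> J" for j k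
    proof -
      have "card {x\<in>J. s x = s j} = card J" using allfull[OF that(1)] by (simp add: load_def n_def)
      then have "{x\<in>J. s x = s j} = J" using fin by (metis (no_types, lifting) card_subset_eq mem_Collect_eq subsetI)
      then show ?thesis using that by auto
    qed
    define \<xi> where "\<xi> = (\<lambda>_::'j. real n powr (d - 1))"
    have "nash d J r dl s \<xi>"
      unfolding nash_def
    proof (intro conjI ballI allI impI)
      show "feasible J r dl s" by (rule feas)
      fix j assume j: "j \<in> J"
      show "0 \<le> \<xi> j" by (simp add: \<xi>_def)
      have setj: "{j'\<in>J. s j' = s j} = J" using same[OF j] by auto
      show "cost d (load J s (s j)) \<le> paid J s \<xi> (s j)"
        using allfull[OF j] costn setj by (simp add: paid_def \<xi>_def n_def)
      {
        fix t assume t: "r j \<le> t \<and> t < dl j \<and> t \<noteq> s j"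
        have e: "{j'\<in>J. s j' = t} = {}" using same[OF j] t by auto
        have "real n powr (d - 1) \<le> 1 powr (d - 1)"
          using npos assms(2) by (intro powr_mono2') auto
        then have "\<xi> j \<le> 1" unfolding \<xi>_def by simp
        then show "\<xi> j \<le> max 0 (cost d (load J s t + 1) - paid J s \<xi> t)"
          by (simp add: load_def paid_def e cost_def)
      }
      have set2: "{j'\<in>J. s j' = s j \<and> j' \<noteq> j} = J - {j}" using same[OF j] by auto
      have "(\<Sum>j'\<in>{j'\<in>J. s j' = s j \<and> j' \<noteq> j}. \<xi> j') = (real n - 1) * real n powr (d - 1)"
        using set2 fin j npos by (simp add: \<xi>_def n_def of_nat_diff)
      then show "\<xi> j \<le> max 0 (cost d (load J s (s j)) - (\<Sum>j'\<in>{j'\<in>J. s j' = s j \<and> j' \<noteq> j}. \<xi> j'))"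
        using allfull[OF j] costn by (simp add: \<xi>_def algebra_simps)
    qed
    then show ?thesis by blast
  qed
qed

end
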